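(* A closed reversible reaction network $(X,\mathscr{R})$ with stoichiometric matrix $S$ is free of cornucopias and abysses if and only if there is no vector $v\in\mathbb{R}^{\mathscr{R}}$ such that $Sv>0$.
   Context: A reaction network (RN) $(X,\mathscr{R})$ consists of a finite non-empty set $X$ of species and a finite non-empty set $\mathscr{R}$ of reactions. Each reaction $r$ is given by stoichiometric coefficients $s^-_{xr},s^+_{xr}\in\mathbb{N}_0$. The stoichiometric matrix $S\in\mathbb{Z}^{X\times\mathscr{R}}$ has entries $S_{xr}=s^+_{xr}-s^-_{xr}$. The RN is closed if every reaction $r$ has $x,y$ with $S_{xr}<0<S_{yr}$. The reverse $\bar r$ of $r$ has $s^-_{x\bar r}=s^+_{xr}$ and $s^+_{x\bar r}=s^-_{xr}$. The RN is reversible if $r\in\mathscr{R}$ implies $\bar r\in\mathscr{R}$. For a real vector $w$, $w>0$ means $w$ is componentwise non-negative and nonzero, and $w<0$ means $-w>0$. A vector $v\in\mathbb{R}^{\mathscr{R}}$ with $v>0$ is a cornucopia if $Sv>0$ and an abyss if $Sv<0$. *)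

theory Defs
  imports Complex_Main
begin

text \<open>Species form a finite (nonempty) type 'x.  A reaction is given by its pair of
  stoichiometric coefficient vectors (s^-, s^+); a reaction network is a finite
  nonempty set R of such reactions.\<close>

type_synonym 'x reaction = "('x \<Rightarrow> nat) \<times> ('x \<Rightarrow> nat)"

definition reaction_network :: "'x::finite reaction set \<Rightarrow> bool" where
  "reaction_network R \<longleftrightarrow> finite R \<and> R \<noteq> {}"

definition stoich :: "'x \<Rightarrow> 'x reaction \<Rightarrow> int" where
  "stoich x r = int (snd r x) - int (fst r x)"

definition rev_reaction :: "'x reaction \<Rightarrow> 'x reaction" where
  "rev_reaction r = (snd r, fst r)"

definition closed_RN :: "'x reaction set \<Rightarrow> bool" where
  "closed_RN R \<longleftrightarrow> (\<forall>r\<in>R. \<exists>x y. stoich x r < 0 \<and> 0 < stoich y r)"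

definition reversible_RN :: "'x reaction set \<Rightarrow> bool" where
  "reversible_RN R \<longleftrightarrow> (\<forall>r\<in>R. rev_reaction r \<in> R)"

text \<open>w > 0 on an index set I: componentwise nonnegative and nonzero.\<close>
definition vpos :: "'i set \<Rightarrow> ('i \<Rightarrow> real) \<Rightarrow> bool" where
  "vpos I w \<longleftrightarrow> (\<forall>i\<in>I. 0 \<le> w i) \<and> (\<exists>i\<in>I. w i \<noteq> 0)"

definition vneg :: "'i set \<Rightarrow> ('i \<Rightarrow> real) \<Rightarrow> bool" where
  "vneg I w \<longleftrightarrow> vpos I (\<lambda>i. - w i)"

definition Smult :: "'x reaction set \<Rightarrow> ('x reaction \<Rightarrow> real) \<Rightarrow> 'x \<Rightarrow> real" where
  "Smult R v x = (\<Sum>r\<in>R. real_of_int (stoich x r) * v r)"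

definition cornucopia :: "'x::finite reaction set \<Rightarrow> ('x reaction \<Rightarrow> real) \<Rightarrow> bool" where
  "cornucopia R v \<longleftrightarrow> vpos R v \<and> vpos (UNIV::'x set) (Smult R v)"

definition abyss :: "'x::finite reaction set \<Rightarrow> ('x reaction \<Rightarrow> real) \<Rightarrow> bool" where
  "abyss R v \<longleftrightarrow> vpos R v \<and> vneg (UNIV::'x set) (Smult R v)"

end

theory Submission
  imports Defs
begin

lemma rev_rev: "rev_reaction (rev_reaction r) = r"
  by (simp add: rev_reaction_def)

lemma stoich_rev: "stoich x (rev_reaction r) = - stoich x r"
  by (simp add: rev_reaction_def stoich_def)

lemma bij_rev:
  assumes "reversible_RN R"
  shows "bij_betw rev_reaction R R"
proof (rule bij_betw_byWitness[where f'=rev_reaction])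
  show "\<forall>a\<in>R. rev_reaction (rev_reaction a) = a" by (simp add: rev_rev)
  show "\<forall>a\<in>R. rev_reaction (rev_reaction a) = a" by (simp add: rev_rev)
  show "rev_reaction ` R \<subseteq> R" using assms by (auto simp: reversible_RN_def)
  show "rev_reaction ` R \<subseteq> R" using assms by (auto simp: reversible_RN_def)
qed

lemma sum_rev:
  assumes "reversible_RN R"
  shows "(\<Sum>r\<in>R. real_of_int (stoich x r) * f (rev_reaction r))
       = - (\<Sum>r\<in>R. real_of_int (stoich x r) * f r)"
proof -
  define h where "h s = real_of_int (stoich x (rev_reaction s)) * f s" for s
  have "(\<Sum>r\<in>R. real_of_int (stoich x r) * f (rev_reaction r)) = (\<Sum>r\<in>R. h (rev_reaction r))"
    by (simp add: h_def rev_rev)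
  also have "\<dots> = (\<Sum>r\<in>R. h r)"
    using sum.reindex_bij_betw[OF bij_rev[OF assms], of h] by simp
  also have "\<dots> = - (\<Sum>r\<in>R. real_of_int (stoich x r) * f r)"
    by (simp add: h_def stoich_rev sum_negf)
  finally show ?thesis .
qed

theorem proposition6:
  fixes R :: "('x::finite) reaction set"
  assumes "reaction_network R" and "closed_RN R" and "reversible_RN R"
  shows "((\<nexists>v. cornucopia R v) \<and> (\<nexists>v. abyss R v))
           \<longleftrightarrow> (\<nexists>v. vpos (UNIV::'x set) (Smult R v))"
proof
  assume H: "(\<nexists>v. cornucopia R v) \<and> (\<nexists>v. abyss R v)"
  show "\<nexists>v. vpos (UNIV::'x set) (Smult R v)"
  proof
    assume "\<exists>v. vpos (UNIV::'x set) (Smult R v)"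
    then obtain v where v: "vpos (UNIV::'x set) (Smult R v)" by blast
    define w where "w r = max (v r) 0 + max (- v (rev_reaction r)) 0" for r
    have Sw: "Smult R w = Smult R v"
    proof
      fix x
      have "Smult R w x = (\<Sum>r\<in>R. real_of_int (stoich x r) * max (v r) 0)
          + (\<Sum>r\<in>R. real_of_int (stoich x r) * (\<lambda>s. max (- v s) 0) (rev_reaction r))"
        by (simp add: Smult_def w_def distrib_left sum.distrib)
      also have "\<dots> = (\<Sum>r\<in>R. real_of_int (stoich x r) * max (v r) 0)
          - (\<Sum>r\<in>R. real_of_int (stoich x r) * max (- v r) 0)"
        using sum_rev[OF assms(3), of x "\<lambda>s. max (- v s) 0"] by simp
      also have "\<dots> = (\<Sum>r\<in>R. real_of_int (stoich x r) * (max (v r) 0 - max (- v r) 0))"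
        by (simp add: right_diff_distrib sum_subtractf)
      also have "\<dots> = Smult R v x"
        unfolding Smult_def by (rule sum.cong) (auto simp: max_def)
      finally show "Smult R w x = Smult R v x" .
    qed
    have "vpos R w"
    proof -
      have "\<forall>i\<in>R. 0 \<le> w i" by (simp add: w_def)
      moreover have "\<exists>i\<in>R. w i \<noteq> 0"
      proof (rule ccontr)
        assume "\<not> (\<exists>i\<in>R. w i \<noteq> 0)"
        then have "Smult R w x = 0" for x by (simp add: Smult_def)
        then show False using v Sw by (auto simp: vpos_def)
      qed
      ultimately show ?thesis by (simp add: vpos_def)
    qed
    then have "cornucopia R w" using v Sw by (simp add: cornucopia_def)
    then show False using H by blast
  qed
next
  assume H: "\<nexists>v. vpos (UNIV::'x set) (Smult R v)"
  have "\<nexists>v. cornucopia R v" using H by (auto simp: cornucopia_def)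
  moreover have "\<nexists>v. abyss R v"
  proof
    assume "\<exists>v. abyss R v"
    then obtain v where v: "vneg (UNIV::'x set) (Smult R v)" by (auto simp: abyss_def)
    have "Smult R (\<lambda>r. v (rev_reaction r)) x = - Smult R v x" for x
      unfolding Smult_def by (rule sum_rev[OF assms(3)])
    then have "Smult R (\<lambda>r. v (rev_reaction r)) = (\<lambda>x. - Smult R v x)" by blast
    then have "vpos (UNIV::'x set) (Smult R (\<lambda>r. v (rev_reaction r)))"
      using v by (simp add: vneg_def)
    then show False using H by blast
  qed
  ultimately show "(\<nexists>v. cornucopia R v) \<and> (\<nexists>v. abyss R v)" by blast
qed

end
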